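(* Let $G$ be an undirected graph. If all the prime components of $G$ are Generalized Bartlett graphs, then $G$ is a Generalized Bartlett graph.
   Context: A graph $G=(V,E)$ has a decomposition into components $G_1=(V_1,E_1)$ and $G_2=(V_2,E_2)$ (the induced subgraphs on $V_1,V_2$) if $V=V_1\cup V_2$ with $(V_1\setminus V_2)\cup(V_2\setminus V_1)\ne\emptyset$, $V_1\cap V_2\neq\emptyset$ induces a complete subgraph, and $V_1\cap V_2$ separates $V_1\setminus V_2$ from $V_2\setminus V_1$ (no edge joins a vertex of $V_1\setminus V_2$ to one of $V_2\setminus V_1$). A graph admitting no such decomposition is prime; repeated decomposition breaks any graph into prime components. For an ordering $\sigma:V\to\{1,\dots,p\}$, set $E^\sigma_0=E$, $E^\sigma_i=E^\sigma_{i-1}\cup\{\{u,v\}:u\ne v,\sigma(u)>i,\sigma(v)>i,\{u,\sigma^{-1}(i)\},\{v,\sigma^{-1}(i)\}\in E^\sigma_{i-1}\}$ for $i=1,\dots,p-2$, and $D^\sigma(E)=E^\sigma_{p-2}$. $G$ is Generalized Bartlett if some ordering $\sigma$ admits no $u,v,w$ with $\{u,v\},\{v,w\},\{u,w\}\notin E$ but all in $D^\sigma(E)$. *)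

theory Defs
  imports Main
begin

definition graph :: "'a set \<Rightarrow> 'a set set \<Rightarrow> bool" where
  "graph V E \<longleftrightarrow> finite V \<and> (\<forall>e\<in>E. \<exists>u v. u \<noteq> v \<and> u \<in> V \<and> v \<in> V \<and> e = {u, v})"

definition induced :: "'a set set \<Rightarrow> 'a set \<Rightarrow> 'a set set" where
  "induced E W = {e \<in> E. e \<subseteq> W}"

definition complete_in :: "'a set \<Rightarrow> 'a set set \<Rightarrow> bool" where
  "complete_in C E \<longleftrightarrow> (\<forall>u\<in>C. \<forall>v\<in>C. u \<noteq> v \<longrightarrow> {u, v} \<in> E)"

definition decomposes :: "'a set \<Rightarrow> 'a set set \<Rightarrow> 'a set \<Rightarrow> 'a set \<Rightarrow> bool" where
  "decomposes V E V1 V2 \<longleftrightarrow>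
     V = V1 \<union> V2 \<and> V1 - V2 \<noteq> {} \<and> V2 - V1 \<noteq> {} \<and> V1 \<inter> V2 \<noteq> {} \<and>
     complete_in (V1 \<inter> V2) E \<and>
     (\<forall>u\<in>V1 - V2. \<forall>v\<in>V2 - V1. {u, v} \<notin> E)"

definition prime_graph :: "'a set \<Rightarrow> 'a set set \<Rightarrow> bool" where
  "prime_graph V E \<longleftrightarrow> \<not> (\<exists>V1 V2. decomposes V E V1 V2)"

inductive prime_comp :: "'a set \<Rightarrow> 'a set set \<Rightarrow> 'a set \<Rightarrow> 'a set set \<Rightarrow> bool" where
  self: "prime_graph V E \<Longrightarrow> prime_comp V E V E"
| left: "decomposes V E V1 V2 \<Longrightarrow> prime_comp V1 (induced E V1) W F \<Longrightarrow> prime_comp V E W F"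
| right: "decomposes V E V1 V2 \<Longrightarrow> prime_comp V2 (induced E V2) W F \<Longrightarrow> prime_comp V E W F"

text \<open>Elimination/fill-in edge sets E^sigma_i for an ordering sigma : V -> {1..p}.\<close>
fun fill :: "'a set \<Rightarrow> ('a \<Rightarrow> nat) \<Rightarrow> 'a set set \<Rightarrow> nat \<Rightarrow> 'a set set" where
  "fill V \<sigma> E 0 = E"
| "fill V \<sigma> E (Suc i) = fill V \<sigma> E i \<union>
     {{u, v} | u v. u \<noteq> v \<and> u \<in> V \<and> v \<in> V \<and> \<sigma> u > Suc i \<and> \<sigma> v > Suc i \<and>
        {u, the_inv_into V \<sigma> (Suc i)} \<in> fill V \<sigma> E i \<and>
        {v, the_inv_into V \<sigma> (Suc i)} \<in> fill V \<sigma> E i}"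

definition D :: "'a set \<Rightarrow> ('a \<Rightarrow> nat) \<Rightarrow> 'a set set \<Rightarrow> 'a set set" where
  "D V \<sigma> E = fill V \<sigma> E (card V - 2)"

definition gen_bartlett :: "'a set \<Rightarrow> 'a set set \<Rightarrow> bool" where
  "gen_bartlett V E \<longleftrightarrow> (\<exists>\<sigma>. bij_betw \<sigma> V {1..card V} \<and>
     \<not> (\<exists>u v w. {u, v} \<notin> E \<and> {v, w} \<notin> E \<and> {u, w} \<notin> E \<and>
              {u, v} \<in> D V \<sigma> E \<and> {v, w} \<in> D V \<sigma> E \<and> {u, w} \<in> D V \<sigma> E))"

end

theory Submission
  imports Defs
begin

definition cl :: "'a set set \<Rightarrow> 'a \<Rightarrow> 'a set \<Rightarrow> 'a set set" where
  "cl E x S = {{u,v}| u v. u \<noteq> v \<and> u \<in> S \<and> v \<in> S \<and> {u,x} \<in> E \<and> {v,x} \<in> E}"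

fun fillA :: "'a set set \<Rightarrow> 'a list \<Rightarrow> 'a set \<Rightarrow> 'a set set" where
  "fillA E [] R = E"
| "fillA E (x#xs) R = fillA (E \<union> cl E x (set xs \<union> R)) xs R"

definition nobad :: "'a set set \<Rightarrow> 'a set set \<Rightarrow> bool" where
  "nobad E0 F \<longleftrightarrow> \<not> (\<exists>u v w. {u, v} \<notin> E0 \<and> {v, w} \<notin> E0 \<and> {u, w} \<notin> E0 \<and>
              {u, v} \<in> F \<and> {v, w} \<in> F \<and> {u, w} \<in> F)"

definition GBL :: "'a set \<Rightarrow> 'a set set \<Rightarrow> bool" where
  "GBL V E \<longleftrightarrow> (\<exists>xs. distinct xs \<and> set xs = V \<and> nobad E (fillA E xs {}))"

definition pairs :: "'a set \<Rightarrow> 'a set set" where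
  "pairs S = {{u,v}| u v. u \<noteq> v \<and> u \<in> S \<and> v \<in> S}"

lemma fillA_app: "fillA E (xs @ ys) R = fillA (fillA E xs (set ys \<union> R)) ys R"
  by (induction xs arbitrary: E) (simp_all add: Un_assoc)

lemma fillA_sup: "E \<subseteq> fillA E xs R"
  by (induction xs arbitrary: E) (simp, fastforce)

lemma cl_pairs: "cl E x S \<subseteq> pairs S"
  unfolding cl_def pairs_def by blast

lemma pairs_mono: "S \<subseteq> T \<Longrightarrow> pairs S \<subseteq> pairs T"
  unfolding pairs_def by blast

lemma cl_empty: "cl E x {} = {}"
  unfolding cl_def by simp

lemma cl_single: "cl E x {b} = {}"
  unfolding cl_def by simp

lemma fillA_sub: "fillA E xs R \<subseteq> E \<union> pairs (set xs \<union> R)"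
proof (induction xs arbitrary: E)
  case Nil then show ?case by simp
next
  case (Cons x xs)
  have h0: "fillA E (x#xs) R \<subseteq> (E \<union> cl E x (set xs \<union> R)) \<union> pairs (set xs \<union> R)"
    using Cons by simp
  have "set xs \<union> R \<subseteq> set (x#xs) \<union> R" by auto
  hence h2: "pairs (set xs \<union> R) \<subseteq> pairs (set (x#xs) \<union> R)"
    by (rule pairs_mono)
  have h1: "cl E x (set xs \<union> R) \<subseteq> pairs (set (x#xs) \<union> R)"
    using cl_pairs h2 by (rule order_trans)
  have "cl E x (set xs \<union> R) \<union> pairs (set xs \<union> R) \<subseteq> pairs (set (x#xs) \<union> R)"
    using h1 h2 by (rule Un_least)
  hence "E \<union> (cl E x (set xs \<union> R) \<union> pairs (set xs \<union> R)) \<subseteq> E \<union> pairs (set (x#xs) \<union> R)"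
    by (rule Un_mono[OF subset_refl])
  thus ?case by (rule order_trans[OF h0[unfolded Un_assoc]])
qed

lemma fillA_short: "length xs \<le> 2 \<Longrightarrow> fillA E xs {} = E"
proof (cases xs)
  case Nil thus ?thesis by simp
next
  case (Cons a ys)
  assume l: "length xs \<le> 2"
  show ?thesis
  proof (cases ys)
    case Nil thus ?thesis using Cons by (simp add: cl_empty)
  next
    case (Cons b zs)
    hence "zs = []" using l \<open>xs = a # ys\<close> by simp
    thus ?thesis using Cons \<open>xs = a # ys\<close> by (simp add: cl_empty cl_single)
  qed
qed

lemma cl_nox: "{x,z} \<notin> E \<Longrightarrow> e \<in> cl E z S \<Longrightarrow> x \<notin> e"
  unfolding cl_def by auto

lemma Zlem:
  assumes "x \<notin> set zs" "\<forall>z\<in>set zs. {x,z} \<notin> EA" "\<forall>e\<in>EA. x \<notin> e \<longrightarrow> e \<in> EB"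
  shows "\<forall>e\<in>fillA EA zs (insert x R). (x \<notin> e \<longrightarrow> e \<in> fillA EB zs R) \<and> (x \<in> e \<longrightarrow> e \<in> EA)"
  using assms
proof (induction zs arbitrary: EA EB)
  case Nil thus ?case by auto
next
  case (Cons z zs)
  let ?A = "EA \<union> cl EA z (set zs \<union> insert x R)"
  let ?B = "EB \<union> cl EB z (set zs \<union> R)"
  have zx: "{x,z} \<notin> EA" using Cons.prems by simp
  have zx': "z \<noteq> x" using Cons.prems by auto
  have nox: "\<forall>e\<in>cl EA z (set zs \<union> insert x R). x \<notin> e" using cl_nox[OF zx] by blast
  have h2: "\<forall>z'\<in>set zs. {x,z'} \<notin> ?A" using Cons.prems nox by auto
  have h3: "\<forall>e\<in>?A. x \<notin> e \<longrightarrow> e \<in> ?B"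
  proof
    fix e assume eA: "e \<in> ?A"
    show "x \<notin> e \<longrightarrow> e \<in> ?B"
    proof (cases "e \<in> EA")
      case True thus ?thesis using Cons.prems by auto
    next
      case False
      then obtain u v where e: "e = {u,v}" "u \<noteq> v" "u \<in> set zs \<union> insert x R" "v \<in> set zs \<union> insert x R"
          "{u,z}\<in>EA" "{v,z}\<in>EA"
        using eA unfolding cl_def by blast
      have ux: "x \<noteq> u" "x \<noteq> v" using zx e by auto
      hence "x \<notin> {u,z}" "x \<notin> {v,z}" using zx' by auto
      hence "{u,z} \<in> EB" "{v,z} \<in> EB" using bspec[OF Cons.prems(3), of "{u,z}"] bspec[OF Cons.prems(3), of "{v,z}"] e(5,6) by auto
      moreover have "u \<in> set zs \<union> R" "v \<in> set zs \<union> R" using e ux by auto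
      ultimately have "e \<in> cl EB z (set zs \<union> R)" using e unfolding cl_def by blast
      thus ?thesis by simp
    qed
  qed
  have "x \<notin> set zs" using Cons.prems by simp
  from Cons.IH[OF this h2 h3] show ?case using nox by auto
qed

lemma pairs_Pow: "pairs S \<subseteq> Pow S"
  unfolding pairs_def by auto

lemma cl_cong:
  assumes "\<And>u. (u \<in> S \<and> {u,z} \<in> E) \<longleftrightarrow> (u \<in> T \<and> {u,z} \<in> E')"
  shows "cl E z S = cl E' z T"
proof -
  have "\<And>u v. (u \<noteq> v \<and> u \<in> S \<and> v \<in> S \<and> {u,z}\<in>E \<and> {v,z}\<in>E) = (u \<noteq> v \<and> u \<in> T \<and> v \<in> T \<and> {u,z}\<in>E' \<and> {v,z}\<in>E')"
    using assms by blast
  thus ?thesis by (simp only: cl_def)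
qed

lemma restr:
  assumes "set zs \<subseteq> W" "EB \<subseteq> Pow W" "\<forall>z\<in>set zs. \<forall>u\<in>set zs \<union> R. {u,z} \<notin> X"
  shows "fillA (EB \<union> X) zs R = fillA EB zs (R \<inter> W) \<union> X"
  using assms
proof (induction zs arbitrary: EB)
  case Nil thus ?case by simp
next
  case (Cons z zs)
  have iff: "\<And>u. (u \<in> set zs \<union> R \<and> {u,z} \<in> EB \<union> X) \<longleftrightarrow> (u \<in> set zs \<union> (R \<inter> W) \<and> {u,z} \<in> EB)"
  proof -
    fix u
    show "(u \<in> set zs \<union> R \<and> {u,z} \<in> EB \<union> X) \<longleftrightarrow> (u \<in> set zs \<union> (R \<inter> W) \<and> {u,z} \<in> EB)"
    proof
      assume a: "u \<in> set zs \<union> R \<and> {u,z} \<in> EB \<union> X"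
      have "u \<in> set (z#zs) \<union> R" using a by simp
      hence "{u,z} \<notin> X" using bspec[OF Cons.prems(3), of z] by (cases "u = z") simp_all
      hence "{u,z} \<in> EB" using a by blast
      hence "{u,z} \<subseteq> W" using Cons.prems(2) by blast
      hence "u \<in> W" by simp
      thus "u \<in> set zs \<union> (R \<inter> W) \<and> {u,z} \<in> EB" using a \<open>{u,z} \<in> EB\<close> by auto
    qed auto
  qed
  have c: "cl (EB \<union> X) z (set zs \<union> R) = cl EB z (set zs \<union> (R \<inter> W))"
    by (rule cl_cong) (use iff in blast)
  have sub: "EB \<union> cl EB z (set zs \<union> (R \<inter> W)) \<subseteq> Pow W"
  proof -
    have "set zs \<union> (R \<inter> W) \<subseteq> W" using Cons.prems(1) by auto
    hence pw: "Pow (set zs \<union> (R \<inter> W)) \<subseteq> Pow W" by (rule Pow_mono)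
    have "cl EB z (set zs \<union> (R \<inter> W)) \<subseteq> Pow W"
      using order_trans[OF cl_pairs order_trans[OF pairs_Pow pw]] .
    with Cons.prems(2) show ?thesis by (rule Un_least)
  qed
  have h3: "\<forall>z\<in>set zs. \<forall>u\<in>set zs \<union> R. {u,z} \<notin> X" using Cons.prems(3) by auto
  have "fillA (EB \<union> X) (z#zs) R = fillA ((EB \<union> cl EB z (set zs \<union> (R \<inter> W))) \<union> X) zs R"
    using c by (simp add: Un_ac)
  also have "\<dots> = fillA (EB \<union> cl EB z (set zs \<union> (R \<inter> W))) zs (R \<inter> W) \<union> X"
    by (rule Cons.IH[OF _ sub h3]) (use Cons.prems(1) in simp)
  finally show ?case by simp
qed


lemma CL:
  assumes "distinct xs" "K \<subseteq> set xs" "complete_in K E" "nobad E0 (fillA E xs {})"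
  shows "\<exists>zs ks. distinct (zs @ ks) \<and> set (zs @ ks) = set xs \<and> set ks = K \<and> nobad E0 (fillA E (zs @ ks) {})"
  using assms
proof (induction xs arbitrary: E K)
  case Nil
  hence "K = {}" by simp
  thus ?case using Nil.prems by (intro exI[of _ "[]"]) simp
next
  case (Cons x xs)
  define E' where "E' = E \<union> cl E x (set xs)"
  have fx: "fillA E (x#xs) {} = fillA E' xs {}" by (simp add: E'_def)
  have good': "nobad E0 (fillA E' xs {})" using Cons.prems(4) fx by simp
  have dxs: "distinct xs" "x \<notin> set xs" using Cons.prems(1) by auto
  have EE': "E \<subseteq> E'" unfolding E'_def by blast
  show ?case
  proof (cases "x \<in> K")
    case False
    have Ks: "K \<subseteq> set xs" using Cons.prems(2) False by auto
    have Kc: "complete_in K E'" using Cons.prems(3) EE' unfolding complete_in_def by blast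
    obtain zs ks where zk: "distinct (zs@ks)" "set (zs@ks) = set xs" "set ks = K"
        "nobad E0 (fillA E' (zs@ks) {})"
      using Cons.IH[OF dxs(1) Ks Kc good'] by blast
    have "fillA E ((x#zs)@ks) {} = fillA (E \<union> cl E x (set (zs@ks) \<union> {})) (zs@ks) {}"
      by (simp only: append_Cons fillA.simps)
    also have "\<dots> = fillA E' (zs@ks) {}" using zk(2) by (simp add: E'_def)
    finally have "fillA E ((x#zs)@ks) {} = fillA E' (zs@ks) {}" .
    then show ?thesis using zk dxs by (intro exI[of _ "x#zs"] exI[of _ ks]) auto
  next
    case True
    define N where "N = {u \<in> set xs. {u,x} \<in> E}"
    have NK: "K - {x} \<subseteq> N"
    proof
      fix u assume u: "u \<in> K - {x}"
      hence "u \<in> set xs" using Cons.prems(2) by auto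
      moreover have "{u,x} \<in> E" using Cons.prems(3) u True unfolding complete_in_def by auto
      ultimately show "u \<in> N" unfolding N_def by simp
    qed
    have Ns: "N \<subseteq> set xs" unfolding N_def by auto
    have Nc: "complete_in N E'" unfolding complete_in_def E'_def cl_def N_def by blast
    obtain zs ns where zn: "distinct (zs@ns)" "set (zs@ns) = set xs" "set ns = N"
        "nobad E0 (fillA E' (zs@ns) {})"
      using Cons.IH[OF dxs(1) Ns Nc good'] by blast
    have finN: "finite (N - K)" using Ns by (meson finite_Diff finite_set finite_subset)
    obtain ms where ms: "set ms = N - K" "distinct ms" using finite_distinct_list[OF finN] by blast
    have finK: "finite (K - {x})" using Cons.prems(2) by (meson finite_Diff finite_set finite_subset)
    obtain ks' where ks': "set ks' = K - {x}" "distinct ks'" using finite_distinct_list[OF finK] by blast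
    define ys where "ys = zs @ ms @ x # ks'"
    have zsN: "set zs \<inter> N = {}" using zn(1,3) by auto
    have zsxs: "set zs \<subseteq> set xs" using zn(2) by auto
    have setrest: "set (ms @ x # ks') = insert x N" using ms ks' NK True by auto
    have setys: "set ys = insert x (set xs)" using zn(2,3) setrest unfolding ys_def by auto
    have dys: "distinct ys" unfolding ys_def using zn(1) zn(3) ms ks' zsN dxs Ns zsxs NK by auto
    let ?G = "fillA E' (zs@ns) {}"
    have key: "\<forall>e\<in>fillA E ys {}. (x \<notin> e \<longrightarrow> e \<in> ?G) \<and> (x \<in> e \<longrightarrow> e \<in> E)"
    proof
      fix e assume e: "e \<in> fillA E ys {}"
      define S where "S = fillA E zs (insert x N)"
      have "fillA E ys {} = fillA S (ms @ x # ks') {}"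
        unfolding ys_def S_def using fillA_app[of E zs "ms @ x # ks'" "{}"] setrest by simp
      hence eS: "e \<in> S \<union> pairs (insert x N)" using e fillA_sub[of S "ms @ x # ks'" "{}"] setrest by auto
      have zx: "\<forall>z\<in>set zs. {x,z} \<notin> E"
      proof
        fix z assume z: "z \<in> set zs"
        hence "z \<notin> N" "z \<in> set xs" using zsN zsxs by auto
        hence "{z,x} \<notin> E" unfolding N_def by simp
        thus "{x,z} \<notin> E" by (simp add: insert_commute)
      qed
      have xzs: "x \<notin> set zs" using dxs zsxs by auto
      have Z: "\<forall>e\<in>S. (x \<notin> e \<longrightarrow> e \<in> fillA E' zs N) \<and> (x \<in> e \<longrightarrow> e \<in> E)"
        unfolding S_def by (rule Zlem[OF xzs zx]) (use EE' in blast)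
      have GG: "fillA E' zs N \<subseteq> ?G"
        using fillA_app[of E' zs ns "{}"] fillA_sup[of "fillA E' zs N" ns "{}"] zn(3) by simp
      have E'G: "E' \<subseteq> ?G" by (rule fillA_sup)
      show "(x \<notin> e \<longrightarrow> e \<in> ?G) \<and> (x \<in> e \<longrightarrow> e \<in> E)"
      proof (cases "e \<in> S")
        case True thus ?thesis using Z GG by blast
      next
        case False
        then obtain u v where uv: "e = {u,v}" "u \<noteq> v" "u \<in> insert x N" "v \<in> insert x N"
          using eS unfolding pairs_def by blast
        show ?thesis
        proof (intro conjI impI)
          assume "x \<notin> e"
          hence "u \<in> N" "v \<in> N" using uv by auto
          hence "e \<in> cl E x (set xs)" using uv unfolding cl_def N_def by blast
          thus "e \<in> ?G" using E'G unfolding E'_def by blast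
        next
          assume "x \<in> e"
          hence "u = x \<or> v = x" using uv by auto
          thus "e \<in> E" using uv unfolding N_def by (auto simp: insert_commute)
        qed
      qed
    qed
    have EH: "E \<subseteq> fillA E' xs {}" using EE' fillA_sup by blast
    have H: "\<forall>v w. {x,v} \<in> E \<longrightarrow> {x,w} \<in> E \<longrightarrow> {v,w} \<in> fillA E ys {} \<longrightarrow> {v,w} \<in> fillA E' xs {}"
    proof (intro allI impI)
      fix v w assume xv: "{x,v}\<in>E" and xw: "{x,w}\<in>E" and vw: "{v,w} \<in> fillA E ys {}"
      show "{v,w} \<in> fillA E' xs {}"
      proof (cases "{v,w} \<in> E")
        case True thus ?thesis using EH by blast
      next
        case False
        hence "{v,w} \<in> pairs (set ys)" using vw fillA_sub[of E ys "{}"] by auto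
        then obtain a b where ab: "{v,w} = {a,b}" "a\<noteq>b" "a \<in> set ys" "b \<in> set ys"
          unfolding pairs_def by blast
        hence vw': "v \<noteq> w" "v \<in> set ys" "w \<in> set ys" by (auto simp: doubleton_eq_iff)
        show ?thesis
        proof (cases "x = v \<or> x = w")
          case True thus ?thesis using xv xw EH by (auto simp: insert_commute)
        next
          case False
          hence "v \<in> set xs" "w \<in> set xs" using vw' setys by auto
          moreover have "{v,x} \<in> E" "{w,x} \<in> E" using xv xw by (auto simp: insert_commute)
          ultimately have "{v,w} \<in> cl E x (set xs)" using vw'(1) unfolding cl_def by blast
          thus ?thesis using fillA_sup[of E' xs "{}"] unfolding E'_def by blast
        qed
      qed
    qed
    have nb: "nobad E0 (fillA E ys {})"
      unfolding nobad_def
    proof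
      assume "\<exists>u v w. {u, v} \<notin> E0 \<and> {v, w} \<notin> E0 \<and> {u, w} \<notin> E0 \<and>
              {u, v} \<in> fillA E ys {} \<and> {v, w} \<in> fillA E ys {} \<and> {u, w} \<in> fillA E ys {}"
      then obtain u v w where b: "{u, v} \<notin> E0" "{v, w} \<notin> E0" "{u, w} \<notin> E0"
          "{u, v} \<in> fillA E ys {}" "{v, w} \<in> fillA E ys {}" "{u, w} \<in> fillA E ys {}" by blast
      consider "x \<noteq> u \<and> x \<noteq> v \<and> x \<noteq> w" | "x = u" | "x = v" | "x = w" by blast
      then show False
      proof cases
        case 1
        hence "{u,v} \<in> ?G" "{v,w} \<in> ?G" "{u,w} \<in> ?G" using key b(4-6) by auto
        thus False using zn(4) b(1-3) unfolding nobad_def by blast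
      next
        case 2
        hence "{x,v} \<in> E" "{x,w} \<in> E" using key b(4,6) by auto
        moreover have "{v,w} \<in> fillA E' xs {}" using H calculation b(5) by blast
        ultimately show False using good' b(1-3) EH 2 unfolding nobad_def by blast
      next
        case 3
        hence "{x,u} \<in> E" "{x,w} \<in> E" using key b(4,5) by (auto simp: insert_commute)
        moreover have "{u,w} \<in> fillA E' xs {}" using H calculation b(6) by blast
        moreover have "{u,x} \<in> E" using calculation(1) by (simp add: insert_commute)
        ultimately show False using good' b(1-3) EH 3 unfolding nobad_def by blast
      next
        case 4
        hence "{x,u} \<in> E" "{x,v} \<in> E" using key b(5,6) by (auto simp: insert_commute)
        moreover have "{u,v} \<in> fillA E' xs {}" using H calculation b(4) by blast
        moreover have "{u,x} \<in> E" "{v,x} \<in> E" using calculation(1,2) by (simp_all add: insert_commute)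
        ultimately show False using good' b(1-3) EH 4 unfolding nobad_def by blast
      qed
    qed
    have "ys = (zs @ ms) @ (x # ks')" unfolding ys_def by simp
    moreover have "set (x # ks') = K" using ks' True by auto
    ultimately show ?thesis using nb dys setys
      by (intro exI[of _ "zs @ ms"] exI[of _ "x # ks'"]) simp
  qed
qed


lemma COMB:
  assumes dec: "decomposes V E V1 V2"
    and a1: "set a1 = V1 - V2" and c1: "set c1 = V1 \<inter> V2" and b2: "set b2 = V2 - V1"
    and c2: "set c2 = V1 \<inter> V2"
    and g1: "nobad (induced E V1) (fillA (induced E V1) (a1@c1) {})"
    and g2: "nobad (induced E V2) (fillA (induced E V2) (b2@c2) {})"
  shows "nobad E (fillA E (a1@b2@c1) {})"
proof -
  define E1 where "E1 = induced E V1"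
  define E2 where "E2 = induced E V2"
  define X where "X = E - E1"
  define C where "C = V1 \<inter> V2"
  have cmp: "complete_in C E" and sep: "\<forall>u\<in>V1-V2. \<forall>v\<in>V2-V1. {u,v} \<notin> E"
    using dec unfolding decomposes_def C_def by auto
  have E1P: "E1 \<subseteq> Pow V1" unfolding E1_def induced_def by auto
  have E2P: "E2 \<subseteq> Pow V2" unfolding E2_def induced_def by auto
  have E1E: "E1 \<subseteq> E" unfolding E1_def induced_def by auto
  have E2E: "E2 \<subseteq> E" unfolding E2_def induced_def by auto
  have EX: "E = E1 \<union> X" unfolding X_def using E1E by auto
  define F1 where "F1 = fillA E1 a1 C"
  define F2 where "F2 = fillA E2 b2 C"
  have F1P: "F1 \<subseteq> Pow V1"
  proof -
    have "F1 \<subseteq> E1 \<union> pairs (set a1 \<union> C)" unfolding F1_def by (rule fillA_sub)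
    moreover have "pairs (set a1 \<union> C) \<subseteq> Pow V1"
      using pairs_Pow[of "set a1 \<union> C"] a1 unfolding C_def by blast
    ultimately show ?thesis using E1P by blast
  qed
  have st1: "fillA E a1 (set (b2@c1) \<union> {}) = F1 \<union> X"
  proof -
    have s: "set (b2@c1) \<union> {} = V2" using b2 c1 by auto
    have "fillA (E1 \<union> X) a1 V2 = fillA E1 a1 (V2 \<inter> V1) \<union> X"
    proof (rule restr)
      show "set a1 \<subseteq> V1" using a1 by auto
      show "E1 \<subseteq> Pow V1" by (rule E1P)
      show "\<forall>z\<in>set a1. \<forall>u\<in>set a1 \<union> V2. {u, z} \<notin> X"
      proof (intro ballI)
        fix z u assume z: "z \<in> set a1" and u: "u \<in> set a1 \<union> V2"
        show "{u,z} \<notin> X"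
        proof
          assume uz: "{u,z} \<in> X"
          hence "{u,z} \<in> E" "{u,z} \<notin> E1" unfolding X_def by auto
          hence "\<not> {u,z} \<subseteq> V1" unfolding E1_def induced_def by auto
          hence "u \<in> V2 - V1" using z u a1 by auto
          moreover have "z \<in> V1 - V2" using z a1 by auto
          ultimately have "{z,u} \<notin> E" using sep by blast
          thus False using \<open>{u,z} \<in> E\<close> by (simp add: insert_commute)
        qed
      qed
    qed
    moreover have "V2 \<inter> V1 = C" unfolding C_def by auto
    ultimately show ?thesis using s EX F1_def by simp
  qed
  define Y where "Y = (F1 \<union> X) - E2"
  have E2S: "E2 \<subseteq> F1 \<union> X"
  proof
    fix e assume e: "e \<in> E2"
    show "e \<in> F1 \<union> X"
    proof (cases "e \<in> E1")
      case True thus ?thesis using fillA_sup[of E1 a1 C] unfolding F1_def by blast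
    next
      case False thus ?thesis using e E2E unfolding X_def by blast
    qed
  qed
  have SY: "F1 \<union> X = E2 \<union> Y" unfolding Y_def using E2S by blast
  have st2: "fillA (F1 \<union> X) b2 (set c1 \<union> {}) = F2 \<union> Y"
  proof -
    have "fillA (E2 \<union> Y) b2 C = fillA E2 b2 (C \<inter> V2) \<union> Y"
    proof (rule restr)
      show "set b2 \<subseteq> V2" using b2 by auto
      show "E2 \<subseteq> Pow V2" by (rule E2P)
      show "\<forall>z\<in>set b2. \<forall>u\<in>set b2 \<union> C. {u, z} \<notin> Y"
      proof (intro ballI)
        fix z u assume z: "z \<in> set b2" and u: "u \<in> set b2 \<union> C"
        show "{u,z} \<notin> Y"
        proof
          assume uz: "{u,z} \<in> Y"
          hence n2: "{u,z} \<notin> E2" and uz': "{u,z} \<in> F1 \<union> X" unfolding Y_def by auto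
          have sub2: "{u,z} \<subseteq> V2" using z u b2 unfolding C_def by auto
          show False
          proof (cases "{u,z} \<in> X")
            case True
            hence "{u,z} \<in> E" unfolding X_def by auto
            thus False using n2 sub2 unfolding E2_def induced_def by auto
          next
            case False
            hence "{u,z} \<in> F1" using uz' by auto
            hence "z \<in> V1" using F1P by auto
            thus False using z b2 by auto
          qed
        qed
      qed
    qed
    moreover have "C \<inter> V2 = C" unfolding C_def by auto
    moreover have "set c1 \<union> {} = C" using c1 unfolding C_def by auto
    ultimately show ?thesis using SY F2_def by simp
  qed
  have whole: "fillA E (a1@b2@c1) {} = fillA (F2 \<union> Y) c1 {}"
    using fillA_app[of E a1 "b2@c1" "{}"] fillA_app[of "fillA E a1 (set (b2@c1) \<union> {})" b2 c1 "{}"] st1 st2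
    by simp
  have whsub: "fillA E (a1@b2@c1) {} \<subseteq> F2 \<union> Y \<union> pairs C"
    using whole fillA_sub[of "F2 \<union> Y" c1 "{}"] c1 unfolding C_def by simp
  have pC: "pairs C \<subseteq> E" using cmp unfolding pairs_def complete_in_def by blast
  define G1 where "G1 = fillA E1 (a1@c1) {}"
  define G2 where "G2 = fillA E2 (b2@c2) {}"
  have F1G1: "F1 \<subseteq> G1"
    using fillA_app[of E1 a1 c1 "{}"] fillA_sup[of "fillA E1 a1 (set c1 \<union> {})" c1 "{}"] c1
    unfolding F1_def G1_def C_def by simp
  have F2G2: "F2 \<subseteq> G2"
    using fillA_app[of E2 b2 c2 "{}"] fillA_sup[of "fillA E2 b2 (set c2 \<union> {})" c2 "{}"] c2
    unfolding F2_def G2_def C_def by simp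
  have X_E: "X \<subseteq> E" unfolding X_def by auto
  have YS: "Y \<subseteq> F1 \<union> X" unfolding Y_def by (rule Diff_subset)
  have "F2 \<union> Y \<union> pairs C \<subseteq> G2 \<union> (G1 \<union> E) \<union> E"
    using F2G2 Un_mono[OF F1G1 X_E] YS pC by (meson Un_mono order_trans)
  hence cover0: "fillA E (a1@b2@c1) {} \<subseteq> G2 \<union> (G1 \<union> E) \<union> E" using whsub by (rule order_trans[rotated])
  have cover: "\<forall>p\<in>fillA E (a1@b2@c1) {}. p \<in> E \<or> p \<in> G1 \<or> p \<in> G2"
  proof
    fix p assume "p \<in> fillA E (a1@b2@c1) {}"
    hence "p \<in> G2 \<union> (G1 \<union> E) \<union> E" using cover0 by blast
    thus "p \<in> E \<or> p \<in> G1 \<or> p \<in> G2" by blast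
  qed
  have G1s: "G1 \<subseteq> E1 \<union> pairs V1"
  proof -
    have "set (a1@c1) \<union> {} = V1" using a1 c1 by auto
    thus ?thesis using fillA_sub[of E1 "a1@c1" "{}"] unfolding G1_def by simp
  qed
  have G2s: "G2 \<subseteq> E2 \<union> pairs V2"
  proof -
    have "set (b2@c2) \<union> {} = V2" using b2 c2 by auto
    thus ?thesis using fillA_sub[of E2 "b2@c2" "{}"] unfolding G2_def by simp
  qed
  have side1: "\<And>u v. {u,v} \<in> G1 \<Longrightarrow> {u,v} \<notin> E \<Longrightarrow> u \<in> V1 \<and> v \<in> V1 \<and> \<not> (u \<in> V2 \<and> v \<in> V2)"
  proof -
    fix u v assume uv: "{u,v} \<in> G1" "{u,v} \<notin> E"
    hence "{u,v} \<in> pairs V1" using G1s E1E by blast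
    then obtain a b where ab: "{u,v} = {a,b}" "a \<noteq> b" "a \<in> V1" "b \<in> V1" unfolding pairs_def by blast
    have "u \<in> V1 \<and> v \<in> V1" using ab by (auto simp: doubleton_eq_iff)
    moreover have "\<not> (u \<in> V2 \<and> v \<in> V2)"
    proof
      assume "u \<in> V2 \<and> v \<in> V2"
      hence "a \<in> C" "b \<in> C" using ab unfolding C_def by (auto simp: doubleton_eq_iff)
      hence "{a,b} \<in> E" using cmp ab(2) unfolding complete_in_def by blast
      thus False using uv ab by simp
    qed
    ultimately show "u \<in> V1 \<and> v \<in> V1 \<and> \<not> (u \<in> V2 \<and> v \<in> V2)" by blast
  qed
  have side2: "\<And>u v. {u,v} \<in> G2 \<Longrightarrow> {u,v} \<notin> E \<Longrightarrow> u \<in> V2 \<and> v \<in> V2 \<and> \<not> (u \<in> V1 \<and> v \<in> V1)"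
  proof -
    fix u v assume uv: "{u,v} \<in> G2" "{u,v} \<notin> E"
    hence "{u,v} \<in> pairs V2" using G2s E2E by blast
    then obtain a b where ab: "{u,v} = {a,b}" "a \<noteq> b" "a \<in> V2" "b \<in> V2" unfolding pairs_def by blast
    have "u \<in> V2 \<and> v \<in> V2" using ab by (auto simp: doubleton_eq_iff)
    moreover have "\<not> (u \<in> V1 \<and> v \<in> V1)"
    proof
      assume "u \<in> V1 \<and> v \<in> V1"
      hence "a \<in> C" "b \<in> C" using ab unfolding C_def by (auto simp: doubleton_eq_iff)
      hence "{a,b} \<in> E" using cmp ab(2) unfolding complete_in_def by blast
      thus False using uv ab by simp
    qed
    ultimately show "u \<in> V2 \<and> v \<in> V2 \<and> \<not> (u \<in> V1 \<and> v \<in> V1)" by blast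
  qed
  have cls: "\<And>u v. {u,v} \<in> fillA E (a1@b2@c1) {} \<Longrightarrow> {u,v} \<notin> E \<Longrightarrow>
      (u \<in> V1 \<and> v \<in> V1 \<and> \<not> (u \<in> V2 \<and> v \<in> V2) \<and> {u,v} \<in> G1) \<or>
      (u \<in> V2 \<and> v \<in> V2 \<and> \<not> (u \<in> V1 \<and> v \<in> V1) \<and> {u,v} \<in> G2)"
    using cover side1 side2 by blast
  show ?thesis unfolding nobad_def
  proof
    assume "\<exists>u v w. {u, v} \<notin> E \<and> {v, w} \<notin> E \<and> {u, w} \<notin> E \<and>
              {u, v} \<in> fillA E (a1@b2@c1) {} \<and> {v, w} \<in> fillA E (a1@b2@c1) {} \<and> {u, w} \<in> fillA E (a1@b2@c1) {}"
    then obtain u v w where b: "{u, v} \<notin> E" "{v, w} \<notin> E" "{u, w} \<notin> E"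
      "{u, v} \<in> fillA E (a1@b2@c1) {}" "{v, w} \<in> fillA E (a1@b2@c1) {}" "{u, w} \<in> fillA E (a1@b2@c1) {}"
      by blast
    have n1: "\<not> ({u,v} \<in> G1 \<and> {v,w} \<in> G1 \<and> {u,w} \<in> G1)"
      using g1 b(1-3) E1E unfolding nobad_def G1_def E1_def by blast
    have n2: "\<not> ({u,v} \<in> G2 \<and> {v,w} \<in> G2 \<and> {u,w} \<in> G2)"
      using g2 b(1-3) E2E unfolding nobad_def G2_def E2_def by blast
    have p1: "(u \<in> V1 \<and> v \<in> V1 \<and> \<not> (u \<in> V2 \<and> v \<in> V2) \<and> {u,v} \<in> G1) \<or>
      (u \<in> V2 \<and> v \<in> V2 \<and> \<not> (u \<in> V1 \<and> v \<in> V1) \<and> {u,v} \<in> G2)" using cls b(4,1) .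
    have p2: "(v \<in> V1 \<and> w \<in> V1 \<and> \<not> (v \<in> V2 \<and> w \<in> V2) \<and> {v,w} \<in> G1) \<or>
      (v \<in> V2 \<and> w \<in> V2 \<and> \<not> (v \<in> V1 \<and> w \<in> V1) \<and> {v,w} \<in> G2)" using cls b(5,2) .
    have p3: "(u \<in> V1 \<and> w \<in> V1 \<and> \<not> (u \<in> V2 \<and> w \<in> V2) \<and> {u,w} \<in> G1) \<or>
      (u \<in> V2 \<and> w \<in> V2 \<and> \<not> (u \<in> V1 \<and> w \<in> V1) \<and> {u,w} \<in> G2)" using cls b(6,3) .
    show False using p1 p2 p3 n1 n2 by blast
  qed
qed


lemma MAIN:
  assumes "finite V" "\<forall>W F. prime_comp V E W F \<longrightarrow> GBL W F"
  shows "GBL V E"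
  using assms
proof (induction V arbitrary: E rule: finite_psubset_induct)
  case (psubset V)
  show ?case
  proof (cases "prime_graph V E")
    case True
    thus ?thesis using psubset.prems prime_comp.self by blast
  next
    case False
    then obtain V1 V2 where dec: "decomposes V E V1 V2" unfolding prime_graph_def by blast
    have d: "V = V1 \<union> V2" "V1 - V2 \<noteq> {}" "V2 - V1 \<noteq> {}" "complete_in (V1 \<inter> V2) E"
      using dec unfolding decomposes_def by auto
    have ps1: "V1 \<subset> V" using d by auto
    have ps2: "V2 \<subset> V" using d by auto
    have gb1: "GBL V1 (induced E V1)"
      by (rule psubset.IH[OF ps1]) (use psubset.prems prime_comp.left[OF dec] in blast)
    have gb2: "GBL V2 (induced E V2)"
      by (rule psubset.IH[OF ps2]) (use psubset.prems prime_comp.right[OF dec] in blast)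
    have C1: "complete_in (V1 \<inter> V2) (induced E V1)"
      using d(4) unfolding complete_in_def induced_def by auto
    have C2: "complete_in (V1 \<inter> V2) (induced E V2)"
      using d(4) unfolding complete_in_def induced_def by auto
    obtain xs1 where x1: "distinct xs1" "set xs1 = V1" "nobad (induced E V1) (fillA (induced E V1) xs1 {})"
      using gb1 unfolding GBL_def by blast
    obtain xs2 where x2: "distinct xs2" "set xs2 = V2" "nobad (induced E V2) (fillA (induced E V2) xs2 {})"
      using gb2 unfolding GBL_def by blast
    obtain a1 c1 where y1: "distinct (a1@c1)" "set (a1@c1) = V1" "set c1 = V1 \<inter> V2"
        "nobad (induced E V1) (fillA (induced E V1) (a1@c1) {})"
      using CL[OF x1(1) _ C1 x1(3)] x1(2) by blast
    obtain b2 c2 where y2: "distinct (b2@c2)" "set (b2@c2) = V2" "set c2 = V1 \<inter> V2"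
        "nobad (induced E V2) (fillA (induced E V2) (b2@c2) {})"
      using CL[OF x2(1) _ C2 x2(3)] x2(2) by blast
    have sa1: "set a1 = V1 - V2" using y1(1-3) by auto
    have sb2: "set b2 = V2 - V1" using y2(1-3) by auto
    have nb: "nobad E (fillA E (a1@b2@c1) {})"
      by (rule COMB[OF dec sa1 y1(3) sb2 y2(3) y1(4) y2(4)])
    have "distinct (a1@b2@c1)" using y1(1) y2(1) sa1 sb2 y1(3) by auto
    moreover have "set (a1@b2@c1) = V" using sa1 sb2 y1(3) d(1) by auto
    ultimately show ?thesis using nb unfolding GBL_def by blast
  qed
qed

definition lst :: "'a set \<Rightarrow> ('a \<Rightarrow> nat) \<Rightarrow> 'a list" where
  "lst V \<sigma> = map (\<lambda>i. the_inv_into V \<sigma> (Suc i)) [0..<card V]"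

lemma bridge1:
  assumes bij: "bij_betw \<sigma> V {1..card V}"
  shows "distinct (lst V \<sigma>)" "set (lst V \<sigma>) = V" "D V \<sigma> E = fillA E (lst V \<sigma>) {}"
proof -
  define n where "n = card V"
  define f where "f = (\<lambda>i. the_inv_into V \<sigma> (Suc i))"
  have bij': "bij_betw \<sigma> V {1..n}" using bij n_def by simp
  have inj: "inj_on \<sigma> V" using bij' bij_betw_def by blast
  have binv: "bij_betw (the_inv_into V \<sigma>) {1..n} V" by (rule bij_betw_the_inv_into[OF bij'])
  have fV: "\<And>i. i < n \<Longrightarrow> f i \<in> V" using binv unfolding f_def bij_betw_def by auto
  have sf: "\<And>i. i < n \<Longrightarrow> \<sigma> (f i) = Suc i"
    unfolding f_def by (rule f_the_inv_into_f_bij_betw[OF bij']) auto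
  have fs: "\<And>u. u \<in> V \<Longrightarrow> f (\<sigma> u - 1) = u"
  proof -
    fix u assume u: "u \<in> V"
    hence "\<sigma> u \<in> {1..n}" using bij' unfolding bij_betw_def by auto
    hence "Suc (\<sigma> u - 1) = \<sigma> u" by auto
    thus "f (\<sigma> u - 1) = u" unfolding f_def using the_inv_into_f_f[OF inj u] by simp
  qed
  have sV: "\<And>u. u \<in> V \<Longrightarrow> 1 \<le> \<sigma> u \<and> \<sigma> u \<le> n" using bij' unfolding bij_betw_def by auto
  have mem: "\<And>k u. u \<in> f ` {k..<n} \<longleftrightarrow> u \<in> V \<and> k < \<sigma> u"
  proof -
    fix k u
    show "u \<in> f ` {k..<n} \<longleftrightarrow> u \<in> V \<and> k < \<sigma> u"
    proof
      assume "u \<in> f ` {k..<n}"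
      then obtain i where i: "k \<le> i" "i < n" "u = f i" by auto
      thus "u \<in> V \<and> k < \<sigma> u" using fV sf by auto
    next
      assume u: "u \<in> V \<and> k < \<sigma> u"
      hence "f (\<sigma> u - 1) = u" using fs by blast
      moreover have "\<sigma> u - 1 \<in> {k..<n}" using u sV[of u] by auto
      ultimately show "u \<in> f ` {k..<n}" by (metis imageI)
    qed
  qed
  have lst_eq: "lst V \<sigma> = map f [0..<n]" unfolding lst_def f_def n_def by simp
  have injf: "inj_on f {0..<n}"
  proof (rule inj_onI)
    fix i j assume i: "i \<in> {0..<n}" and j: "j \<in> {0..<n}" and e: "f i = f j"
    have "Suc i = \<sigma> (f i)" using sf i by simp
    also have "\<dots> = Suc j" using sf j e by simp
    finally show "i = j" by simp
  qed
  show "distinct (lst V \<sigma>)" unfolding lst_eq using injf by (simp add: distinct_map)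
  have "f ` {0..<n} = V"
  proof (rule set_eqI)
    fix u show "u \<in> f ` {0..<n} \<longleftrightarrow> u \<in> V" using mem[of u 0] sV[of u] by auto
  qed
  thus "set (lst V \<sigma>) = V" unfolding lst_eq by simp
  have step: "\<And>k. k \<le> n \<Longrightarrow> fill V \<sigma> E k = fillA E (map f [0..<k]) (f ` {k..<n})"
  proof -
    fix k show "k \<le> n \<Longrightarrow> fill V \<sigma> E k = fillA E (map f [0..<k]) (f ` {k..<n})"
    proof (induction k)
      case 0 thus ?case by simp
    next
      case (Suc k)
      hence kn: "k < n" by simp
      let ?R = "f ` {Suc k..<n}"
      have r1: "set [f k] \<union> ?R = f ` {k..<n}"
      proof -
        have "{k..<n} = insert k {Suc k..<n}" using kn by auto
        thus ?thesis by simp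
      qed
      have "fillA E (map f [0..<Suc k]) ?R = fillA E (map f [0..<k] @ [f k]) ?R" by simp
      also have "\<dots> = fillA (fillA E (map f [0..<k]) (set [f k] \<union> ?R)) [f k] ?R" by (rule fillA_app)
      also have "\<dots> = fillA (fill V \<sigma> E k) [f k] ?R" using r1 Suc.IH kn by simp
      also have "\<dots> = fill V \<sigma> E k \<union> cl (fill V \<sigma> E k) (f k) ?R" by simp
      finally have A: "fillA E (map f [0..<Suc k]) ?R = fill V \<sigma> E k \<union> cl (fill V \<sigma> E k) (f k) ?R" .
      have fk: "f k = the_inv_into V \<sigma> (Suc k)" by (simp add: f_def)
      have eq: "\<And>u v. (u \<noteq> v \<and> u \<in> ?R \<and> v \<in> ?R \<and> {u, f k} \<in> fill V \<sigma> E k \<and> {v, f k} \<in> fill V \<sigma> E k) =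
         (u \<noteq> v \<and> u \<in> V \<and> v \<in> V \<and> \<sigma> u > Suc k \<and> \<sigma> v > Suc k \<and>
        {u, the_inv_into V \<sigma> (Suc k)} \<in> fill V \<sigma> E k \<and>
        {v, the_inv_into V \<sigma> (Suc k)} \<in> fill V \<sigma> E k)"
        unfolding mem fk by blast
      have "cl (fill V \<sigma> E k) (f k) ?R = {{u, v} | u v. u \<noteq> v \<and> u \<in> V \<and> v \<in> V \<and> \<sigma> u > Suc k \<and> \<sigma> v > Suc k \<and>
        {u, the_inv_into V \<sigma> (Suc k)} \<in> fill V \<sigma> E k \<and>
        {v, the_inv_into V \<sigma> (Suc k)} \<in> fill V \<sigma> E k}"
        unfolding cl_def by (simp only: eq)
      with A show ?case by simp
    qed
  qed
  have "D V \<sigma> E = fillA E (map f [0..<n-2]) (f ` {n-2..<n})"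
    unfolding D_def n_def[symmetric] by (rule step) simp
  also have "\<dots> = fillA (fillA E (map f [0..<n-2]) (set (map f [n-2..<n]) \<union> {})) (map f [n-2..<n]) {}"
  proof -
    have "set (map f [n-2..<n]) \<union> {} = f ` {n-2..<n}" by simp
    moreover have "length (map f [n-2..<n]) \<le> 2" by simp
    ultimately show ?thesis using fillA_short[of "map f [n-2..<n]" "fillA E (map f [0..<n-2]) (f ` {n-2..<n})"]
      by simp
  qed
  also have "\<dots> = fillA E (map f [0..<n-2] @ map f [n-2..<n]) {}" by (rule fillA_app[symmetric])
  also have "map f [0..<n-2] @ map f [n-2..<n] = map f [0..<n]"
  proof -
    have "[0..<n] = [0..<n-2] @ [n-2..<n]"
    proof (cases "n \<ge> 2")
      case True
      hence nn: "n - 2 + 2 = n" by simp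
      have "[0..<n-2+2] = [0..<n-2] @ [n-2..<n-2+2]" by (rule upt_add_eq_append) simp
      thus ?thesis unfolding nn .
    next
      case False
      hence "n - 2 = 0" by simp
      thus ?thesis by simp
    qed
    thus ?thesis by simp
  qed
  finally show "D V \<sigma> E = fillA E (lst V \<sigma>) {}" unfolding lst_eq .
qed

lemma bridge2:
  assumes "distinct xs"
  shows "\<exists>\<sigma>. bij_betw \<sigma> (set xs) {1..card (set xs)} \<and> lst (set xs) \<sigma> = xs"
proof -
  define n where "n = length xs"
  have cn: "card (set xs) = n" using distinct_card[OF assms] n_def by simp
  define g where "g = (\<lambda>i. xs ! (i - 1))"
  have bg: "bij_betw g {1..n} (set xs)"
  proof (rule bij_betw_imageI)
    show "inj_on g {1..n}"
    proof (rule inj_onI)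
      fix i j assume i: "i \<in> {1..n}" and j: "j \<in> {1..n}" and e: "g i = g j"
      have "i - 1 < length xs" "j - 1 < length xs" using i j unfolding n_def by auto
      hence "i - 1 = j - 1" using e nth_eq_iff_index_eq[OF assms, of "i-1" "j-1"] unfolding g_def by simp
      thus "i = j" using i j by auto
    qed
    show "g ` {1..n} = set xs"
    proof
      show "g ` {1..n} \<subseteq> set xs" unfolding g_def n_def by auto
      show "set xs \<subseteq> g ` {1..n}"
      proof
        fix x assume "x \<in> set xs"
        then obtain i where i: "i < n" "xs ! i = x" unfolding n_def by (auto simp: in_set_conv_nth)
        hence "g (Suc i) = x" unfolding g_def by simp
        moreover have "Suc i \<in> {1..n}" using i by auto
        ultimately show "x \<in> g ` {1..n}" by (metis imageI)
      qed
    qed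
  qed
  define \<sigma> where "\<sigma> = the_inv_into {1..n} g"
  have bs: "bij_betw \<sigma> (set xs) {1..n}" unfolding \<sigma>_def by (rule bij_betw_the_inv_into[OF bg])
  have injs: "inj_on \<sigma> (set xs)" using bs bij_betw_def by blast
  have injg: "inj_on g {1..n}" using bg bij_betw_def by blast
  have "\<And>i. i < n \<Longrightarrow> the_inv_into (set xs) \<sigma> (Suc i) = xs ! i"
  proof -
    fix i assume i: "i < n"
    have m: "Suc i \<in> {1..n}" using i by auto
    have s: "\<sigma> (g (Suc i)) = Suc i" unfolding \<sigma>_def by (rule the_inv_into_f_f[OF injg m])
    have gi: "g (Suc i) \<in> set xs" using i unfolding g_def n_def by simp
    have "the_inv_into (set xs) \<sigma> (\<sigma> (g (Suc i))) = g (Suc i)" by (rule the_inv_into_f_f[OF injs gi])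
    thus "the_inv_into (set xs) \<sigma> (Suc i) = xs ! i" using s unfolding g_def by simp
  qed
  hence "lst (set xs) \<sigma> = map (\<lambda>i. xs ! i) [0..<n]" unfolding lst_def cn by simp
  also have "\<dots> = xs" unfolding n_def by (rule map_nth)
  finally show ?thesis using bs cn by blast
qed

theorem lemma3:
  fixes V :: "'a set" and E :: "'a set set"
  assumes "graph V E"
    and "\<forall>W F. prime_comp V E W F \<longrightarrow> gen_bartlett W F"
  shows "gen_bartlett V E"
proof -
  have fin: "finite V" using assms(1) unfolding graph_def by simp
  have h: "\<forall>W F. prime_comp V E W F \<longrightarrow> GBL W F"
  proof (intro allI impI)
    fix W F assume "prime_comp V E W F"
    hence "gen_bartlett W F" using assms(2) by blast
    then obtain \<sigma> where s: "bij_betw \<sigma> W {1..card W}" "nobad F (D W \<sigma> F)"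
      unfolding gen_bartlett_def nobad_def by blast
    show "GBL W F" unfolding GBL_def
      using bridge1[OF s(1)] s(2) by metis
  qed
  obtain xs where xs: "distinct xs" "set xs = V" "nobad E (fillA E xs {})"
    using MAIN[OF fin h] unfolding GBL_def by blast
  obtain \<sigma> where s: "bij_betw \<sigma> V {1..card V}" "lst V \<sigma> = xs" using bridge2[OF xs(1)] xs(2) by blast
  have "D V \<sigma> E = fillA E xs {}" using bridge1(3)[OF s(1)] s(2) by simp
  thus ?thesis unfolding gen_bartlett_def using s(1) xs(3) unfolding nobad_def by metis
qed

end
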